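(* Let $U\subset\mathbb R^2$ be a compact star-shaped domain (origin in the interior, smooth boundary) and let $\hat U$ be its convex hull. Then $\rho_{\rm sys}(\mathbb T^2\times U)\le\dfrac{\mathrm{area}(\hat U)}{3\,\mathrm{area}(U)}$.
   Context: $\mathbb T^2=\mathbb R^2/\mathbb Z^2$, $T^*\mathbb T^2=\mathbb T^2\times\mathbb R^2$, $\lambda_{\rm can}=p_1dq_1+p_2dq_2$. For $X=\mathbb T^2\times A$, $\mathrm{sys}(\partial X)$ is the minimal action of a closed Reeb orbit of $\lambda_{\rm can}|_{\partial X}$, $\mathrm{vol}(\partial X)=\int_{\partial X}\lambda_{\rm can}\wedge d\lambda_{\rm can}$ $(=2\,\mathrm{area}(A))$, and $\rho_{\rm sys}(X)=\mathrm{sys}(\partial X)^2/\mathrm{vol}(\partial X)$; when $\partial A$ is not smooth (as may happen for $\hat U$), quantities are defined as limits over $C^0$-close smooth approximations of $A$. *)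

theory Defs
  imports "HOL-Analysis.Analysis"
begin

text \<open>The phase space
  T^*T^2 = T^2 x R^2 is lifted to its universal cover in q: a point is a pair
  (q, p) with q, p in R^2; closedness of orbits in T^2 is closedness modulo
  the lattice Z^2 in the q-component.\<close>

type_synonym pt = "real \<times> real"
type_synonym phase = "pt \<times> pt"

definition smooth_fun :: "(real \<Rightarrow> real) \<Rightarrow> bool" where
  "smooth_fun f \<longleftrightarrow> (\<forall>n x. ((deriv ^^ n) f) differentiable (at x))"

definition radial_domain :: "(real \<Rightarrow> real) \<Rightarrow> pt set" where
  "radial_domain f = {(r * cos t, r * sin t) | r t. 0 \<le> r \<and> r \<le> f t}"

text \<open>Compact star-shaped domain, origin in the interior, smooth boundary
  (transverse to the radial direction, as needed for the contact condition).\<close>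
definition smooth_star_shaped_domain :: "pt set \<Rightarrow> bool" where
  "smooth_star_shaped_domain U \<longleftrightarrow>
     (\<exists>f. smooth_fun f \<and> (\<forall>t. f t > 0) \<and> (\<forall>t. f (t + 2 * pi) = f t)
          \<and> U = radial_domain f)"

definition in_lattice :: "pt \<Rightarrow> bool" where
  "in_lattice k \<longleftrightarrow> fst k \<in> \<int> \<and> snd k \<in> \<int>"

definition tangent_vectors :: "'a::real_normed_vector set \<Rightarrow> 'a \<Rightarrow> 'a set" where
  "tangent_vectors S x = {v. \<exists>\<gamma> e. e > 0 \<and> (\<forall>t\<in>{-e<..<e}. \<gamma> t \<in> S) \<and> \<gamma> 0 = x
       \<and> (\<gamma> has_vector_derivative v) (at 0)}"

text \<open>lambda_can = p1 dq1 + p2 dq2, evaluated at (q,p) on a vector (a,b).\<close>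
definition lam_can :: "phase \<Rightarrow> phase \<Rightarrow> real" where
  "lam_can x v = snd x \<bullet> fst v"

text \<open>d lambda_can = dp1 /\ dq1 + dp2 /\ dq2 (constant coefficients).\<close>
definition dlam_can :: "phase \<Rightarrow> phase \<Rightarrow> real" where
  "dlam_can v w = snd v \<bullet> fst w - snd w \<bullet> fst v"

definition bdry_lift :: "pt set \<Rightarrow> phase set" where
  "bdry_lift A = UNIV \<times> frontier A"

definition is_reeb_vector :: "phase set \<Rightarrow> phase \<Rightarrow> phase \<Rightarrow> bool" where
  "is_reeb_vector \<Sigma> x v \<longleftrightarrow> v \<in> tangent_vectors \<Sigma> x \<and> lam_can x v = 1
      \<and> (\<forall>w\<in>tangent_vectors \<Sigma> x. dlam_can v w = 0)"

definition closed_reeb_orbit :: "phase set \<Rightarrow> (real \<Rightarrow> phase) \<Rightarrow> real \<Rightarrow> bool" where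
  "closed_reeb_orbit \<Sigma> \<gamma> T \<longleftrightarrow> T > 0 \<and> (\<forall>t. \<gamma> t \<in> \<Sigma>)
     \<and> (\<forall>t. \<exists>v. (\<gamma> has_vector_derivative v) (at t) \<and> is_reeb_vector \<Sigma> (\<gamma> t) v)
     \<and> in_lattice (fst (\<gamma> T) - fst (\<gamma> 0)) \<and> snd (\<gamma> T) = snd (\<gamma> 0)"

definition action :: "(real \<Rightarrow> phase) \<Rightarrow> real \<Rightarrow> real" where
  "action \<gamma> T = integral {0..T} (\<lambda>t. lam_can (\<gamma> t) (vector_derivative \<gamma> (at t)))"

definition sys_bd :: "pt set \<Rightarrow> real" where
  "sys_bd A = Inf {action \<gamma> T | \<gamma> T. closed_reeb_orbit (bdry_lift A) \<gamma> T}"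

text \<open>vol(partial X) = integral of lambda /\ d lambda = 2 area(A).\<close>
definition vol_bd :: "pt set \<Rightarrow> real" where
  "vol_bd A = 2 * measure lebesgue A"

definition rho_sys :: "pt set \<Rightarrow> real" where
  "rho_sys A = (sys_bd A)\<^sup>2 / vol_bd A"

end

theory Submission
  imports Defs
begin


lemma cross_pt:
  fixes E :: "(real \<times> real) set"
  assumes "convex E" "(x1,y1) \<in> E" "(x2,y2) \<in> E" "y1 \<le> c" "c \<le> y2" "y1 < y2"
  shows "(x1 + (c - y1)/(y2-y1)*(x2-x1), c) \<in> E"
proof -
  define s where "s = (c - y1)/(y2-y1)"
  have s0: "0 \<le> s" "s \<le> 1" using assms by (auto simp: s_def divide_le_eq_1)
  have "(1 - s) *\<^sub>R (x1,y1) + s *\<^sub>R (x2,y2) \<in> E"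
    using assms(1-3) s0 by (intro convexD) auto
  moreover have "s * (y2 - y1) = c - y1" using assms(6) by (simp add: s_def)
  hence "(1 - s) * y1 + s * y2 = c" by (simp add: algebra_simps)
  hence "(1 - s) *\<^sub>R (x1,y1) + s *\<^sub>R (x2,y2) = (x1 + s*(x2-x1), c)"
    by (simp add: algebra_simps)
  ultimately show ?thesis by (simp add: s_def)
qed

lemma cross_le:
  fixes E :: "(real \<times> real) set"
  assumes "convex E" "(x1,y1) \<in> E" "(x2,y2) \<in> E" "y1 \<le> c" "c \<le> y2" "y1 < y2"
    and "\<And>X. (X,c) \<in> E \<Longrightarrow> X \<le> M"
  shows "(y2-y1)*x1 + (c-y1)*(x2-x1) \<le> (y2-y1)*M"
proof -
  have "x1 + (c - y1)/(y2-y1)*(x2-x1) \<le> M" using assms cross_pt[OF assms(1-6)] by blast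
  hence "(y2-y1)*(x1 + (c - y1)/(y2-y1)*(x2-x1)) \<le> (y2-y1)*M"
    using assms(6) by (intro mult_left_mono) auto
  moreover have "(y2-y1)*(x1 + (c - y1)/(y2-y1)*(x2-x1)) = (y2-y1)*x1 + (c-y1)*(x2-x1)"
    using assms(6) by (simp add: field_simps)
  ultimately show ?thesis by simp
qed

lemma cross_ge:
  fixes E :: "(real \<times> real) set"
  assumes "convex E" "(x1,y1) \<in> E" "(x2,y2) \<in> E" "y1 \<le> c" "c \<le> y2" "y1 < y2"
    and "\<And>X. (X,c) \<in> E \<Longrightarrow> M \<le> X"
  shows "(y2-y1)*M \<le> (y2-y1)*x1 + (c-y1)*(x2-x1)"
proof -
  have "M \<le> x1 + (c - y1)/(y2-y1)*(x2-x1)" using assms cross_pt[OF assms(1-6)] by blast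
  hence "(y2-y1)*M \<le> (y2-y1)*(x1 + (c - y1)/(y2-y1)*(x2-x1))"
    using assms(6) by (intro mult_left_mono) auto
  moreover have "(y2-y1)*(x1 + (c - y1)/(y2-y1)*(x2-x1)) = (y2-y1)*x1 + (c-y1)*(x2-x1)"
    using assms(6) by (simp add: field_simps)
  ultimately show ?thesis by simp
qed

definition NL :: "(real \<times> real) set \<Rightarrow> bool" where
  "NL E \<longleftrightarrow> (\<forall>i j::int. (i,j) \<noteq> (0,0) \<longrightarrow> (\<forall>s>1. (s * of_int i, s * of_int j) \<notin> E))"

lemma NLD: "NL E \<Longrightarrow> (i,j) \<noteq> (0,0) \<Longrightarrow> s > 1 \<Longrightarrow> (s * of_int i, s * of_int j) \<notin> E"
  unfolding NL_def by blast

lemma key_ineq: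
  fixes u w g t :: real
  assumes u: "0 < u" "u < 1" and w: "0 < w" "w < 1" and g: "g > 1/3"
    and I: "(1-t)*(1-u) > g/3" and III: "(1-w)*(t-g) > g/3" and II: "u + w < 3*u*w"
  shows False
proof -
  have g0: "g > 0" using g by simp
  have p: "1 - t > 0"
  proof (rule ccontr)
    assume "\<not> 1 - t > 0"
    hence "(1-t)*(1-u) \<le> 0" using u by (simp add: mult_nonpos_nonneg)
    thus False using I g0 by simp
  qed
  have q: "t - g > 0"
  proof (rule ccontr)
    assume "\<not> t - g > 0"
    hence "(1-w)*(t-g) \<le> 0" using w by (simp add: mult_nonneg_nonpos)
    thus False using III g0 by simp
  qed
  define s where "s = (3*(1-t) - g)/g"
  define r where "r = (3*(t-g) - g)/g"
  have "3*(1-t)*(1-u) > g" using I by (simp add: algebra_simps)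
  moreover have "3*(1-t)*(1-u) < 3*(1-t)" using p u by simp
  ultimately have s0: "s > 0" using g0 by (simp add: s_def field_simps)
  have "3*(t-g)*(1-w) > g" using III by (simp add: algebra_simps)
  moreover have "3*(t-g)*(1-w) < 3*(t-g)" using q w by simp
  ultimately have r0: "r > 0" using g0 by (simp add: r_def field_simps)
  have sr: "s + r < 4" using g g0 by (simp add: s_def r_def field_simps)
  have us: "(1-u)*(s+1) > 1"
  proof -
    have "s + 1 = 3*(1-t)/g" using g0 by (simp add: s_def field_simps)
    hence "(1-u)*(s+1) = (3*(1-t)*(1-u))/g" by simp
    moreover have "(3*(1-t)*(1-u))/g > 1" using \<open>3*(1-t)*(1-u) > g\<close> g0 by simp
    ultimately show ?thesis by simp
  qed
  have wr: "(1-w)*(r+1) > 1"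
  proof -
    have "r + 1 = 3*(t-g)/g" using g0 by (simp add: r_def field_simps)
    hence "(1-w)*(r+1) = (3*(t-g)*(1-w))/g" by simp
    moreover have "(3*(t-g)*(1-w))/g > 1" using \<open>3*(t-g)*(1-w) > g\<close> g0 by simp
    ultimately show ?thesis by simp
  qed
  have iu: "1/u > (s+1)/s"
  proof -
    have "u*(s+1) < s" using us by (simp add: algebra_simps)
    thus ?thesis using u s0 by (simp add: field_simps)
  qed
  have iw: "1/w > (r+1)/r"
  proof -
    have "w*(r+1) < r" using wr by (simp add: algebra_simps)
    thus ?thesis using w r0 by (simp add: field_simps)
  qed
  have "1/u + 1/w < 3" using II u w by (simp add: field_simps)
  hence "(s+1)/s + (r+1)/r < 3" using iu iw by simp
  hence "1/s + 1/r < 1" using s0 r0 by (simp add: field_simps)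
  hence rs: "r + s < r * s" using s0 r0 by (simp add: field_simps)
  have "0 \<le> (r - s)^2" by simp
  hence le4: "(r+s)*(r+s) \<ge> 4*(r * s)" by (simp add: power2_eq_square algebra_simps)
  have "(r+s)*(r+s) < 4*(r+s)" using sr r0 s0 by (intro mult_strict_right_mono) auto
  thus False using rs le4 by simp
qed

lemma CL2:
  fixes E :: "(real \<times> real) set"
  assumes cvx: "convex E" and sym: "\<And>x y. (x,y) \<in> E \<Longrightarrow> (-x,-y) \<in> E" and nl: "NL E"
    and e1: "(1,0) \<in> E" and T: "(t,h) \<in> E" and h: "h > 4/3"
    and F1: "\<And>x. (x,1) \<in> E \<Longrightarrow> 0 \<le> x \<and> x \<le> 1"
  shows "(\<forall>x y. (x,y) \<in> E \<longrightarrow> x \<le> 4/3) \<or> (\<forall>x y. (x,y) \<in> E \<longrightarrow> x - y \<le> 4/3)"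
proof (rule ccontr)
  assume "\<not> ?thesis"
  then obtain a1 a2 b1 b2 where A: "(a1,a2) \<in> E" "a1 > 4/3" and B: "(b1,b2) \<in> E" "b1 - b2 > 4/3"
    by auto
  have F0u: "X \<le> 1" if "(X,0) \<in> E" for X
  proof (rule ccontr)
    assume "\<not> X \<le> 1"
    hence "(X * of_int 1, X * of_int 0) \<notin> E" using NLD[OF nl, of 1 0 X] by simp
    thus False using that by simp
  qed
  have F0l: "-1 \<le> X" if "(X,0) \<in> E" for X
    using F0u[of "-X"] sym[OF that] by auto
  have F1u: "X \<le> 1" "0 \<le> X" if "(X,1) \<in> E" for X using F1[OF that] by auto
  have Fm1u: "X \<le> 0" "-1 \<le> X" if "(X,-1) \<in> E" for X using F1[of "-X"] sym[OF that] by auto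
  have me1: "(-1,0) \<in> E" using sym[OF e1] by simp
  have mT: "(-t,-h) \<in> E" using sym[OF T] .
  have t1: "t \<le> 1"
    using cross_le[OF cvx e1 T _ _ _ F1u(1), of 1] h by (simp add: algebra_simps)
  have t2: "h - 1 \<le> t"
    using cross_ge[OF cvx me1 T _ _ _ F1u(2), of 1] h by (simp add: algebra_simps)
  have th: "0 < t" using t2 h by simp
  have Acase: "0 < a2 \<and> a2 < 1"
  proof -
    have "a2 \<noteq> 0" using F0u[of a1] A by auto
    moreover have "\<not> a2 \<ge> 1"
    proof
      assume a: "a2 \<ge> 1"
      have "(a2-0)*1 + (1-0)*(a1-1) \<le> (a2-0)*1"
        using cross_le[OF cvx e1 A(1) _ _ _ F1u(1), of 1] a by simp
      thus False using A by simp
    qed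
    moreover have "\<not> a2 \<le> -1"
    proof
      assume a: "a2 \<le> -1"
      have "(-a2-0)*0 \<le> (-a2-0)*(-1) + (1-0)*(-a1-(-1))"
        using cross_ge[OF cvx me1 sym[OF A(1)] _ _ _ F1u(2), of 1] a by simp
      thus False using A a by simp
    qed
    moreover have "\<not> (-1 < a2 \<and> a2 < 0)"
    proof
      assume a: "-1 < a2 \<and> a2 < 0"
      define u where "u = -a2"
      have u: "0 < u" "u < 1" using a by (auto simp: u_def)
      have Am: "(-a1, u) \<in> E" using sym[OF A(1)] by (simp add: u_def)
      have X1: "(h-u)*0 \<le> (h-u)*(-a1) + (1-u)*(t-(-a1))"
        using cross_ge[OF cvx Am T _ _ _ F1u(2), of 1] u h by simp
      have X2: "(u-(-h))*(-1) \<le> (u-(-h))*(-t) + (0-(-h))*(-a1-(-t))"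
        using cross_ge[OF cvx mT Am _ _ _ F0l, of 0] u h by simp
      have P1: "u*(1-t) > h/3"
      proof -
        have "a1*h \<le> h + u*(1-t)" using X2 by (simp add: algebra_simps)
        moreover have "a1*h > 4/3*h" using A h by simp
        ultimately show ?thesis by simp
      qed
      have P2: "t*(1-u) > 4*(h-1)/3"
      proof -
        have "a1*(h-1) \<le> t*(1-u)" using X1 by (simp add: algebra_simps)
        moreover have "a1*(h-1) > 4/3*(h-1)" using A h by (intro mult_strict_right_mono) auto
        ultimately show ?thesis by simp
      qed
      have "(h/3)*(4*(h-1)/3) < (u*(1-t))*(t*(1-u))"
        using P1 P2 h by (intro mult_strict_mono) auto
      moreover have "(u*(1-t))*(t*(1-u)) = (u*(1-u))*(t*(1-t))" by simp
      moreover have "u*(1-u) \<le> 1/4"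
      proof -
        have "0 \<le> (u - 1/2)^2" by simp
        thus ?thesis by (simp add: power2_eq_square algebra_simps)
      qed
      moreover have "t*(1-t) \<le> 1/4"
      proof -
        have "0 \<le> (t - 1/2)^2" by simp
        thus ?thesis by (simp add: power2_eq_square algebra_simps)
      qed
      moreover have "0 \<le> u*(1-u)" "0 \<le> t*(1-t)" using u th t1 by auto
      ultimately have "(h/3)*(4*(h-1)/3) < 1/16"
        using mult_mono[of "u*(1-u)" "1/4" "t*(1-t)" "1/4"] by simp
      moreover have "(h/3)*(4*(h-1)/3) \<ge> (4/9)*(4/9)"
        using h by (intro mult_mono) auto
      ultimately show False by simp
    qed
    ultimately show ?thesis by linarith
  qed
  have Bcase: "-1 < b2 \<and> b2 < 0"
  proof -
    have "b2 \<noteq> 0" using F0u[of b1] B by auto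
    moreover have "\<not> b2 \<ge> 1"
    proof
      assume a: "b2 \<ge> 1"
      have "(b2-0)*1 + (1-0)*(b1-1) \<le> (b2-0)*1"
        using cross_le[OF cvx e1 B(1) _ _ _ F1u(1), of 1] a by simp
      thus False using B a by simp
    qed
    moreover have "\<not> b2 \<le> -1"
    proof
      assume a: "b2 \<le> -1"
      have "(-b2-0)*0 \<le> (-b2-0)*(-1) + (1-0)*(-b1-(-1))"
        using cross_ge[OF cvx me1 sym[OF B(1)] _ _ _ F1u(2), of 1] a by simp
      thus False using B a by simp
    qed
    moreover have "\<not> (0 < b2 \<and> b2 < 1)"
    proof
      assume a: "0 < b2 \<and> b2 < 1"
      have Y1: "(h-b2)*b1 + (1-b2)*(t-b1) \<le> (h-b2)*1"
        using cross_le[OF cvx B(1) T _ _ _ F1u(1), of 1] a h by simp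
      have Y2: "(b2-(-h))*(-t) + (0-(-h))*(b1-(-t)) \<le> (b2-(-h))*1"
        using cross_le[OF cvx mT B(1) _ _ _ F0u, of 0] a h by simp
      have c1: "h/3 < b2*(2-h)"
      proof -
        have "h*b1 \<le> h + b2*(1+t)" using Y2 by (simp add: algebra_simps)
        moreover have "h*b1 > h*(4/3 + b2)" using B h by simp
        moreover have "b2*(1+t) \<le> b2*2" using t1 a by simp
        ultimately show ?thesis by (simp add: algebra_simps)
      qed
      have c2: "b2 < (7 - 4*h)/3"
      proof -
        have f1: "b1*(h-1) \<le> h - b2 - t*(1-b2)" using Y1 by (simp add: algebra_simps)
        have f2: "t*(1-b2) \<ge> (h-1)*(1-b2)" using t2 a by (intro mult_right_mono) auto
        have f3: "b1*(h-1) > (4/3 + b2)*(h-1)" using B h by (intro mult_strict_right_mono) auto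
        have "(4/3 + b2)*(h-1) < h - b2 - (h-1)*(1-b2)" using f1 f2 f3 by linarith
        thus ?thesis by (simp add: algebra_simps field_simps)
      qed
      have h2: "2 - h > 0"
      proof (rule ccontr)
        assume "\<not> 2 - h > 0"
        hence "b2*(2-h) \<le> 0" using a by (simp add: mult_nonneg_nonpos)
        thus False using c1 h by simp
      qed
      have "b2*(2-h) < (7-4*h)/3*(2-h)" using c2 h2 by simp
      hence "h < (7-4*h)*(2-h)" using c1 by simp
      moreover have "0 \<le> (h - 4/3)*(2-h)" using h h2 by simp
      ultimately have z1: "h < (7-4*h)*(2-h)" and z2: "0 \<le> (h - 4/3)*(2-h)" by auto
      have "(7-4*h)*(2-h) = 14 - 15*h + 4*(h*h)" by (simp add: algebra_simps)
      moreover have "(h - 4/3)*(2-h) = -(h*h) + 10/3*h - 8/3" by (simp add: field_simps)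
      ultimately show False using z1 z2 h by linarith
    qed
    ultimately show ?thesis by linarith
  qed
  define u where "u = a2"
  define w where "w = -b2"
  have u: "0 < u" "u < 1" using Acase by (auto simp: u_def)
  have w: "0 < w" "w < 1" using Bcase by (auto simp: w_def)
  have A': "(a1,u) \<in> E" using A by (simp add: u_def)
  have B': "(b1,-w) \<in> E" using B by (simp add: w_def)
  have I: "(h-u)*a1 + (1-u)*(t-a1) \<le> (h-u)*1"
    using cross_le[OF cvx A' T _ _ _ F1u(1), of 1] u h by simp
  have II: "(u-(-w))*b1 + (0-(-w))*(a1-b1) \<le> (u-(-w))*1"
    using cross_le[OF cvx B' A' _ _ _ F0u, of 0] u w by simp
  have III: "(-w-(-h))*(-t) + (-1-(-h))*(b1-(-t)) \<le> (-w-(-h))*0"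
    using cross_le[OF cvx mT B' _ _ _ Fm1u(1), of "-1"] w h by simp
  have I': "(1-t)*(1-u) > (h-1)/3"
  proof -
    have "(a1-1)*(h-1) \<le> (1-t)*(1-u)" using I by (simp add: algebra_simps)
    moreover have "(a1-1)*(h-1) > 1/3*(h-1)" using A h by simp
    ultimately show ?thesis by simp
  qed
  have III': "(1-w)*(t-(h-1)) > (h-1)/3"
  proof -
    have "b1*(h-1) \<le> t*(1-w)" using III by (simp add: algebra_simps)
    moreover have "b1*(h-1) > (4/3-w)*(h-1)" using B h by (intro mult_strict_right_mono) (auto simp: w_def)
    moreover have "(1-w)*(t-(h-1)) = t*(1-w) - (4/3 - w)*(h-1) + (h-1)/3" by (simp add: field_simps)
    ultimately show ?thesis by linarith
  qed
  have II': "u + w < 3*u*w"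
  proof -
    have "u*b1 + w*a1 \<le> u + w" using II by (simp add: algebra_simps)
    moreover have "u*b1 > u*(4/3 - w)" using B u by (simp add: w_def)
    moreover have "w*a1 > w*(4/3)" using A w by simp
    ultimately show ?thesis by (simp add: algebra_simps)
  qed
  show False using key_ineq[OF u w _ I' III' II'] h by simp
qed

lemma lemG:
  fixes E :: "(real \<times> real) set"
  assumes cvx: "convex E" and P1: "(x1,1) \<in> E" and P2: "(x2,1) \<in> E" and T: "(t,h) \<in> E"
    and h: "h > 1" and n: "x1 < n" "n < x2"
  shows "\<exists>s>1. (s*n, s) \<in> E"
proof -
  define \<epsilon> where "\<epsilon> = min (n - x1) (x2 - n)"
  define K where "K = \<bar>n*h - t\<bar> + 1"
  define \<delta> where "\<delta> = min (1/2) (\<epsilon>/(2*K))"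
  have e0: "\<epsilon> > 0" using n by (simp add: \<epsilon>_def)
  have K0: "K > 0" "K \<ge> 1" by (auto simp: K_def)
  have d0: "\<delta> > 0" "\<delta> \<le> 1/2" "\<delta> \<le> \<epsilon>/(2*K)" using e0 K0 by (auto simp: \<delta>_def)
  define q where "q = n + \<delta>*(n*h - t)/(1-\<delta>)"
  have "\<bar>q - n\<bar> = \<delta>*\<bar>n*h - t\<bar>/(1-\<delta>)" using d0 by (simp add: q_def abs_mult abs_divide)
  also have "\<dots> \<le> 2*\<delta>*\<bar>n*h - t\<bar>"
  proof -
    have "1/(1-\<delta>) \<le> 2" using d0 by (simp add: field_simps)
    hence "(\<delta>*\<bar>n*h - t\<bar>) * (1/(1-\<delta>)) \<le> (\<delta>*\<bar>n*h - t\<bar>) * 2"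
      using d0 by (intro mult_left_mono) auto
    thus ?thesis by simp
  qed
  also have "\<dots> \<le> (\<epsilon>/K)*\<bar>n*h - t\<bar>"
  proof -
    have "2*\<delta> \<le> \<epsilon>/K" using d0 K0 by (simp add: field_simps)
    thus ?thesis by (intro mult_right_mono) auto
  qed
  also have "\<dots> < \<epsilon>"
  proof -
    have "\<bar>n*h - t\<bar> < K" by (simp add: K_def)
    hence "\<epsilon> * \<bar>n*h - t\<bar> < \<epsilon> * K" using e0 by simp
    thus ?thesis using K0 by (simp add: field_simps)
  qed
  finally have qn: "\<bar>q - n\<bar> < \<epsilon>" .
  have q1: "x1 < q" "q < x2" using qn by (auto simp: \<epsilon>_def)
  define u where "u = (x2 - q)/(x2 - x1)"
  define v where "v = (q - x1)/(x2 - x1)"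
  have x12: "x2 - x1 > 0" using q1 by simp
  have uv: "u \<ge> 0" "v \<ge> 0" "u + v = 1" using q1 x12
    by (auto simp: u_def v_def divide_simps)
  have "u *\<^sub>R (x1,1) + v *\<^sub>R (x2,1) \<in> E" using convexD[OF cvx P1 P2 uv] .
  moreover have "u *\<^sub>R (x1,(1::real)) + v *\<^sub>R (x2,1) = (q, 1)"
  proof -
    have "(x2 - q)*x1 + (q - x1)*x2 = q*(x2-x1)" by (simp add: algebra_simps)
    moreover have "u * x1 + v * x2 = ((x2 - q)*x1 + (q - x1)*x2)/(x2-x1)"
      by (simp add: u_def v_def add_divide_distrib)
    ultimately have "u * x1 + v * x2 = q*(x2-x1)/(x2-x1)" by simp
    hence "u * x1 + v * x2 = q" using x12 by simp
    thus ?thesis using uv(3) by simp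
  qed
  ultimately have Q: "(q,1) \<in> E" by simp
  have "(1-\<delta>) *\<^sub>R (q,1) + \<delta> *\<^sub>R (t,h) \<in> E"
    using convexD[OF cvx Q T] d0 by simp
  moreover have "(1-\<delta>) *\<^sub>R (q,1) + \<delta> *\<^sub>R (t,h) = ((1 + \<delta>*(h-1))*n, 1 + \<delta>*(h-1))"
  proof -
    have "(1-\<delta>)*q = (1-\<delta>)*n + \<delta>*(n*h - t)" using d0 by (simp add: q_def field_simps)
    hence "(1-\<delta>)*q + \<delta>*t = (1 + \<delta>*(h-1))*n" by (simp add: algebra_simps)
    thus ?thesis by (simp add: algebra_simps)
  qed
  ultimately have "((1 + \<delta>*(h-1))*n, 1 + \<delta>*(h-1)) \<in> E" by metis
  moreover have "1 + \<delta>*(h-1) > 1" using d0 h by simp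
  ultimately show ?thesis by blast
qed

lemma CL:
  fixes E :: "(real \<times> real) set"
  assumes cvx: "convex E" and sym: "\<And>x y. (x,y) \<in> E \<Longrightarrow> (-x,-y) \<in> E" and nl: "NL E"
    and bd: "bounded E" and e1: "(1,0) \<in> E"
  shows "\<exists>i j::int. (i,j) \<noteq> (0,0) \<and> (\<forall>x y. (x,y) \<in> E \<longrightarrow> of_int i * x + of_int j * y \<le> 4/3)"
proof (cases "\<forall>x y. (x,y) \<in> E \<longrightarrow> y \<le> 4/3")
  case True
  thus ?thesis by (intro exI[of _ 0] exI[of _ 1]) auto
next
  case False
  then obtain t h where T: "(t,h) \<in> E" and h: "h > 4/3" by (auto simp: not_le)
  define S where "S = {x. (x,1) \<in> E}"
  have me1: "(-1,0) \<in> E" using sym[OF e1] by simp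
  have "(1 + (1 - 0)/(h - 0)*(t - 1), 1) \<in> E"
    using cross_pt[OF cvx e1 T, of 1] h by simp
  hence Sne: "S \<noteq> {}" by (auto simp: S_def)
  obtain B where B: "\<And>z. z \<in> E \<Longrightarrow> norm z \<le> B" using bd by (auto simp: bounded_iff)
  have Sbd: "bdd_below S"
  proof (rule bdd_belowI[of _ "-B"])
    fix x assume "x \<in> S"
    hence "norm (x,1::real) \<le> B" using B by (auto simp: S_def)
    moreover have "norm x \<le> norm (x,1::real)" by (rule norm_fst_le)
    ultimately show "-B \<le> x" by simp
  qed
  define \<alpha> where "\<alpha> = Inf S"
  define m where "m = floor \<alpha>"
  have Sm: "of_int m \<le> x \<and> x \<le> of_int m + 1" if xS: "x \<in> S" for x
  proof
    have "\<alpha> \<le> x" using cInf_lower[OF xS Sbd] by (simp add: \<alpha>_def)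
    moreover have "of_int m \<le> \<alpha>" unfolding m_def by (rule of_int_floor_le)
    ultimately show "of_int m \<le> x" by linarith
    show "x \<le> of_int m + 1"
    proof (rule ccontr)
      assume xm: "\<not> x \<le> of_int m + 1"
      have "\<alpha> < of_int m + 1" by (simp add: m_def)
      then obtain x1 where x1: "x1 \<in> S" "x1 < of_int m + 1"
        using cInf_less_iff[OF Sne Sbd] by (auto simp: \<alpha>_def)
      obtain s where s: "s > 1" "(s * of_int (m+1), s) \<in> E"
        using lemG[OF cvx _ _ T _ x1(2), of x] x1(1) xS xm h by (auto simp: S_def)
      have "(s * of_int (m+1), s * of_int 1) \<notin> E" by (rule NLD[OF nl]) (use s in auto)
      thus False using s by simp
    qed
  qed
  define E' where "E' = (\<lambda>z. (fst z + of_int m * snd z, snd z)) -` E"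
  have E'iff: "(x,y) \<in> E' \<longleftrightarrow> (x + of_int m * y, y) \<in> E" for x y by (simp add: E'_def)
  have cvx': "convex E'" unfolding E'_def
    by (rule convex_linear_vimage[OF _ cvx]) (auto intro!: linearI simp: algebra_simps)
  have sym': "(-x,-y) \<in> E'" if "(x,y) \<in> E'" for x y
    using sym[of "x + of_int m * y" y] that by (simp add: E'iff)
  have nl': "NL E'"
    unfolding NL_def
  proof (intro allI impI)
    fix i j :: int and s :: real assume ij: "(i,j) \<noteq> (0,0)" and s: "s > 1"
    have "(i + m*j, j) \<noteq> (0,0)" using ij by auto
    hence "(s * of_int (i + m*j), s * of_int j) \<notin> E" by (rule NLD[OF nl _ s])
    thus "(s * of_int i, s * of_int j) \<notin> E'" by (simp add: E'iff algebra_simps)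
  qed
  have e1': "(1,0) \<in> E'" using e1 by (simp add: E'iff)
  have T': "(t - of_int m * h, h) \<in> E'" using T by (simp add: E'iff)
  have F1': "0 \<le> x \<and> x \<le> 1" if "(x,1) \<in> E'" for x
    using Sm[of "x + of_int m"] that by (simp add: E'iff S_def)
  from CL2[OF cvx' sym' nl' e1' T' h F1']
  show ?thesis
  proof
    assume H: "\<forall>x y. (x,y) \<in> E' \<longrightarrow> x \<le> 4/3"
    have "\<forall>x y. (x,y) \<in> E \<longrightarrow> of_int 1 * x + of_int (-m) * y \<le> 4/3"
    proof (intro allI impI)
      fix x y assume "(x,y) \<in> E"
      hence "(x - of_int m * y, y) \<in> E'" by (simp add: E'iff)
      thus "of_int 1 * x + of_int (-m) * y \<le> 4/3" using H by auto
    qed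
    moreover have "(1::int, -m) \<noteq> (0,0)" by simp
    ultimately show ?thesis by blast
  next
    assume H: "\<forall>x y. (x,y) \<in> E' \<longrightarrow> x - y \<le> 4/3"
    have "\<forall>x y. (x,y) \<in> E \<longrightarrow> of_int 1 * x + of_int (-m-1) * y \<le> 4/3"
    proof (intro allI impI)
      fix x y assume "(x,y) \<in> E"
      hence "(x - of_int m * y, y) \<in> E'" by (simp add: E'iff)
      hence "(x - of_int m * y) - y \<le> 4/3" using H by blast
      thus "of_int 1 * x + of_int (-m-1) * y \<le> 4/3" by (simp add: algebra_simps)
    qed
    moreover have "(1::int, -m-1) \<noteq> (0,0)" by simp
    ultimately show ?thesis by blast
  qed
qed



definition vp :: "real^2 \<Rightarrow> real \<times> real" where "vp x = (x$1, x$2)"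
definition pv :: "real \<times> real \<Rightarrow> real^2" where "pv z = vector [fst z, snd z]"

lemma vp_pv[simp]: "vp (pv z) = z" by (simp add: vp_def pv_def)
lemma pv_vp[simp]: "pv (vp x) = x"
  unfolding vp_def pv_def by (simp add: vec_eq_iff forall_2)

lemma linear_vp: "linear vp"
  by (intro linearI) (auto simp: vp_def)

lemma vp_measurable[measurable]: "vp \<in> borel_measurable borel"
  unfolding vp_def by (intro borel_measurable_continuous_onI continuous_intros) 

lemma lborel_vp: "(lborel :: (real\<times>real) measure) = distr lborel borel vp"
proof (rule lborel_eqI)
  fix l u :: "real \<times> real"
  assume le: "\<And>b. b \<in> Basis \<Longrightarrow> l \<bullet> b \<le> u \<bullet> b"
  have "vp -` box l u = box (pv l) (pv u)"
    by (auto simp: box_def vp_def pv_def Basis_prod_def inner_axis forall_2 Basis_vec_def cart_eq_inner_axis[symmetric] inner_prod_def)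
  moreover have "\<forall>b\<in>Basis. pv l \<bullet> b \<le> pv u \<bullet> b"
    using le[of "(1,0)"] le[of "(0,1)"]
    by (auto simp: pv_def Basis_vec_def cart_eq_inner_axis[symmetric] forall_2 inner_prod_def Basis_prod_def)
  moreover have "(\<Prod>b\<in>Basis. (pv u - pv l) \<bullet> b) = (fst u - fst l) * (snd u - snd l)"
  proof -
    have "(\<Prod>b\<in>(Basis::(real^2) set). (pv u - pv l) \<bullet> b) = (\<Prod>i\<in>UNIV. (pv u - pv l) \<bullet> axis i 1)"
    proof -
      have B: "(Basis :: (real^2) set) = (\<lambda>i. axis i 1) ` UNIV" by (auto simp: Basis_vec_def)
      have "inj (\<lambda>i::2. axis i (1::real))" by (auto simp: inj_on_def axis_eq_axis)
      thus ?thesis unfolding B by (subst prod.reindex) auto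
    qed
    also have "\<dots> = (fst u - fst l) * (snd u - snd l)"
      by (simp add: UNIV_2 cart_eq_inner_axis[symmetric] pv_def)
    finally show ?thesis .
  qed
  moreover have "(\<Prod>b\<in>Basis. (u - l) \<bullet> b) = (fst u - fst l) * (snd u - snd l)"
    by (simp add: Basis_prod_def inner_prod_def)
  ultimately show "emeasure (distr lborel borel vp) (box l u) = (\<Prod>b\<in>Basis. (u - l) \<bullet> b)"
    by (simp add: emeasure_distr emeasure_lborel_box_eq)
qed simp

lemma tri_area:
  fixes A B C :: "real \<times> real"
  shows "measure lebesgue (convex hull {A,B,C}) =
    \<bar>(fst C - fst A) * (snd B - snd A) - (fst B - fst A) * (snd C - snd A)\<bar> / 2"
proof -
  define S' where "S' = convex hull {pv A, pv B, pv C}"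
  have cS': "compact S'" unfolding S'_def by (intro finite_imp_compact_convex_hull) auto
  have img: "vp ` S' = convex hull {A,B,C}"
    unfolding S'_def using convex_hull_linear_image[OF linear_vp, of "{pv A, pv B, pv C}"] by simp
  have cimg: "compact (vp ` S')" using cS' linear_vp
    by (intro compact_continuous_image linear_continuous_on) (auto simp: linear_conv_bounded_linear)
  have "measure lebesgue (vp ` S') = measure lborel (vp ` S')"
    using cimg by (intro measure_completion) (auto dest: compact_imp_closed)
  also have "\<dots> = measure (distr lborel borel vp) (vp ` S')" by (subst lborel_vp[symmetric]) simp
  also have "\<dots> = measure lborel (vp -` (vp ` S') \<inter> space lborel)"
    using cimg by (subst measure_distr) (auto dest: compact_imp_closed)
  also have "vp -` (vp ` S') \<inter> space lborel = S'"
    by (auto simp: image_iff) (metis pv_vp)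
  also have "measure lborel S' = \<bar>(fst C - fst A) * (snd B - snd A) - (fst B - fst A) * (snd C - snd A)\<bar> / 2"
    unfolding S'_def using content_triangle[of "pv A" "pv B" "pv C"] by (simp add: pv_def)
  finally show ?thesis using img by simp
qed



definition tt :: "(real \<times> real) set \<Rightarrow> int \<Rightarrow> int \<Rightarrow> real" where
  "tt D i j = Sup {s. s \<ge> 0 \<and> (s * of_int i, s * of_int j) \<in> D}"

lemma tt_props:
  fixes D :: "(real \<times> real) set"
  assumes cl: "closed D" and B0: "\<forall>z\<in>D. norm z \<le> R" and D0: "0 \<in> D"
    and ij: "(i,j) \<noteq> (0,0)"
  shows "tt D i j \<ge> 0" "(tt D i j * of_int i, tt D i j * of_int j) \<in> D"
    "\<And>s. s \<ge> 0 \<Longrightarrow> (s * of_int i, s * of_int j) \<in> D \<Longrightarrow> s \<le> tt D i j"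
    "tt D i j * max \<bar>of_int i\<bar> \<bar>of_int j\<bar> \<le> R"
proof -
  define A where "A = {s. s \<ge> 0 \<and> (s * of_int i, s * of_int j) \<in> D}"
  have B: "\<And>z. z \<in> D \<Longrightarrow> norm z \<le> R" using B0 by blast
  have bnd: "s * max \<bar>of_int i\<bar> \<bar>of_int j\<bar> \<le> R" if "s \<in> A" for s
  proof -
    have s0: "s \<ge> 0" and sD: "(s * of_int i, s * of_int j) \<in> D" using that by (auto simp: A_def)
    have n: "norm (s * of_int i, s * of_int j) \<le> R" using B[OF sD] .
    have "\<bar>s * of_int i\<bar> \<le> R" using order.trans[OF norm_fst_le n] by simp
    moreover have "\<bar>s * of_int j\<bar> \<le> R" using order.trans[OF norm_snd_le n] by simp
    ultimately show ?thesis using s0 by (auto simp: abs_mult max_def)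
  qed
  have m1: "max \<bar>real_of_int i\<bar> \<bar>of_int j\<bar> \<ge> 1" using ij by (auto simp: max_def)
  have Ane: "A \<noteq> {}" using D0 by (auto simp: A_def zero_prod_def intro!: exI[of _ 0])
  have Abd: "bdd_above A"
  proof (rule bdd_aboveI[of _ R])
    fix s assume "s \<in> A"
    hence "s * max \<bar>of_int i\<bar> \<bar>of_int j\<bar> \<le> R" "s \<ge> 0" using bnd by (auto simp: A_def)
    moreover have "s * 1 \<le> s * max \<bar>real_of_int i\<bar> \<bar>of_int j\<bar>" using m1 \<open>s \<ge> 0\<close> by (intro mult_left_mono) auto
    ultimately show "s \<le> R" by simp
  qed
  have Acl: "closed A"
  proof -
    have "A = {s. 0 \<le> s} \<inter> (\<lambda>s. (s * of_int i, s * of_int j)) -` D" by (auto simp: A_def)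
    moreover have "closed ((\<lambda>s::real. (s * of_int i, s * of_int j)) -` D)"
      by (rule continuous_closed_vimage[OF cl]) (intro continuous_intros)
    moreover have "closed {s::real. 0 \<le> s}" using closed_atLeast[of "0::real"] by (simp add: atLeast_def)
    ultimately show ?thesis by (auto intro: closed_Int)
  qed
  have SA: "Sup A \<in> A" by (rule closed_contains_Sup[OF Ane Abd Acl])
  have "Sup A \<ge> 0 \<and> (Sup A * of_int i, Sup A * of_int j) \<in> D"
    using SA unfolding A_def by blast
  thus "tt D i j \<ge> 0" "(tt D i j * of_int i, tt D i j * of_int j) \<in> D"
    by (auto simp: tt_def A_def)
  show "tt D i j * max \<bar>of_int i\<bar> \<bar>of_int j\<bar> \<le> R" using bnd[OF SA] by (simp add: tt_def A_def)
  show "\<And>s. s \<ge> 0 \<Longrightarrow> (s * of_int i, s * of_int j) \<in> D \<Longrightarrow> s \<le> tt D i j"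
    unfolding tt_def A_def[symmetric] by (rule cSup_upper[OF _ Abd]) (auto simp: A_def)
qed

lemma SYM:
  fixes D :: "(real \<times> real) set" and c r :: real
  assumes cvx: "convex D" and sym: "\<And>x y. (x,y) \<in> D \<Longrightarrow> (-x,-y) \<in> D" and cpt: "compact D"
    and r: "r > 0" "ball 0 r \<subseteq> D" and c: "c > 0"
    and H: "\<And>i j::int. (i,j) \<noteq> (0,0) \<Longrightarrow> \<exists>x y. (x,y) \<in> D \<and> of_int i * x + of_int j * y > c"
  shows "\<exists>i j::int. (i,j) \<noteq> (0,0) \<and> (3*c/4 * of_int i, 3*c/4 * of_int j) \<in> D"
proof (rule ccontr)
  assume contra: "\<not> ?thesis"
  have cl: "closed D" using cpt by (rule compact_imp_closed)
  obtain R where RB: "\<And>z. z \<in> D \<Longrightarrow> norm z \<le> R" using compact_imp_bounded[OF cpt] by (auto simp: bounded_iff)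
  have D0: "0 \<in> D" using r by auto
  have Rr: "R \<ge> r/2"
  proof -
    have "dist 0 (r/2, 0::real) = r/2" using r by (simp add: zero_prod_def dist_Pair_Pair)
    hence "(r/2, 0::real) \<in> ball 0 r" using r by simp
    hence "(r/2, 0::real) \<in> D" using r(2) by blast
    hence "norm (r/2, 0::real) \<le> R" by (rule RB)
    thus ?thesis using r by simp
  qed
  have RB0: "\<forall>z\<in>D. norm z \<le> R" using RB by blast
  note ttp = tt_props[OF cl RB0 D0]
  define N :: int where "N = ceiling (2*R/r) + 1"
  have "2*R/r \<ge> 1" using Rr r by (simp add: field_simps)
  hence N1: "N \<ge> 1" by (simp add: N_def)
  define F where "F = ({-N..N} \<times> {-N..N}) - {(0::int,0::int)}"
  have Ffin: "finite F" by (simp add: F_def)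
  have e1F: "(1,0) \<in> F" using N1 by (simp add: F_def)
  have t10: "tt D 1 0 \<ge> r/2"
  proof -
    have "dist 0 (r/2, 0::real) = r/2" using r by (simp add: zero_prod_def dist_Pair_Pair)
    hence "(r/2 * of_int 1, r/2 * of_int (0::int)) \<in> D" using r by auto
    thus ?thesis by (intro ttp(3)) (use r in auto)
  qed
  have outside: "tt D i j < r/2" if "(i,j) \<notin> F" "(i,j) \<noteq> (0,0)" for i j
  proof -
    have big: "max \<bar>real_of_int i\<bar> \<bar>of_int j\<bar> > 2*R/r"
    proof -
      have "\<bar>i\<bar> > N \<or> \<bar>j\<bar> > N" using that by (auto simp: F_def)
      hence "max \<bar>real_of_int i\<bar> \<bar>of_int j\<bar> \<ge> of_int N + 1" by (auto simp: max_def)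
      moreover have "of_int N \<ge> 2*R/r" unfolding N_def by linarith
      ultimately show ?thesis by simp
    qed
    have le: "tt D i j * max \<bar>of_int i\<bar> \<bar>of_int j\<bar> \<le> R" by (rule ttp(4)[OF that(2)])
    have t0: "tt D i j \<ge> 0" by (rule ttp(1)[OF that(2)])
    show ?thesis
    proof (cases "tt D i j = 0")
      case True thus ?thesis using r by simp
    next
      case False
      hence tp: "tt D i j > 0" using t0 by simp
      have "tt D i j * (2*R/r) < tt D i j * max \<bar>of_int i\<bar> \<bar>of_int j\<bar>"
        using mult_strict_left_mono[OF big tp] by simp
      hence "tt D i j * (2*R/r) < R" using le by simp
      hence "tt D i j * (2*R) < R * r" using r by (simp add: field_simps)
      moreover have "R > 0" using Rr r by simp
      ultimately have "(tt D i j * 2) * R < (r) * R" by (simp add: algebra_simps)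
      hence "tt D i j * 2 < r" using \<open>R > 0\<close> by (simp only: mult_less_cancel_right)
      thus ?thesis by simp
    qed
  qed
  obtain i0 j0 where ij0F: "(i0,j0) \<in> F" and ij0max: "\<And>p. p \<in> F \<Longrightarrow> tt D (fst p) (snd p) \<le> tt D i0 j0"
  proof -
    define f where "f = (\<lambda>p. tt D (fst p) (snd p))"
    have "Max (f ` F) \<in> f ` F" using Ffin e1F by (intro Max_in) auto
    then obtain p where p: "p \<in> F" "f p = Max (f ` F)" by auto
    have "\<And>q. q \<in> F \<Longrightarrow> f q \<le> f p" using p Ffin by (auto intro: Max_ge)
    thus ?thesis using that[of "fst p" "snd p"] p by (auto simp: f_def)
  qed
  have ij0: "(i0,j0) \<noteq> (0,0)" using ij0F by (auto simp: F_def)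
  define \<tau> where "\<tau> = tt D i0 j0"
  have tau_max: "tt D i j \<le> \<tau>" if "(i,j) \<noteq> (0,0)" for i j
  proof (cases "(i,j) \<in> F")
    case True thus ?thesis using ij0max[of "(i,j)"] by (simp add: \<tau>_def)
  next
    case False
    hence "tt D i j < r/2" using outside that by blast
    also have "\<dots> \<le> tt D 1 0" by (rule t10)
    also have "\<dots> \<le> \<tau>" using ij0max[OF e1F] by (simp add: \<tau>_def)
    finally show ?thesis by simp
  qed
  have tau_pos: "\<tau> > 0" using ij0max[OF e1F] t10 r by (simp add: \<tau>_def)
  have tauD: "(\<tau> * of_int i0, \<tau> * of_int j0) \<in> D" using ttp(2)[OF ij0] by (simp add: \<tau>_def)
  have notin: "(s * of_int i, s * of_int j) \<notin> D" if "(i,j) \<noteq> (0,0)" "s > \<tau>" for i j s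
  proof
    assume "(s * of_int i, s * of_int j) \<in> D"
    hence "s \<le> tt D i j" using ttp(3)[OF that(1)] that tau_pos by simp
    thus False using tau_max[OF that(1)] that(2) by simp
  qed
  have tau_lt: "\<tau> < 3*c/4"
  proof (rule ccontr)
    assume "\<not> \<tau> < 3*c/4"
    hence th: "\<tau> \<ge> 3*c/4" by simp
    define \<theta> where "\<theta> = (3*c/4)/\<tau>"
    have th0: "0 \<le> \<theta>" "\<theta> \<le> 1" using th c tau_pos by (auto simp: \<theta>_def field_simps)
    have "(1-\<theta>) *\<^sub>R 0 + \<theta> *\<^sub>R (\<tau> * of_int i0, \<tau> * of_int j0) \<in> D"
      using convexD[OF cvx D0 tauD, of "1-\<theta>" "\<theta>"] th0 by simp
    moreover have "\<theta> * \<tau> = 3*c/4" using tau_pos by (simp add: \<theta>_def)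
    ultimately have "(3*c/4 * of_int i0, 3*c/4 * of_int j0) \<in> D"
      by (simp add: mult.assoc[symmetric])
    thus False using contra ij0 by blast
  qed
  have gcd1: "gcd i0 j0 = 1"
  proof (rule ccontr)
    assume g1: "gcd i0 j0 \<noteq> 1"
    define d where "d = gcd i0 j0"
    have d0: "d > 0" using ij0 by (simp add: d_def)
    hence d2: "d \<ge> 2" using g1 unfolding d_def by linarith
    have "d dvd i0" "d dvd j0" by (simp_all add: d_def)
    then obtain i' j' where i': "i0 = d * i'" and j': "j0 = d * j'" by (auto elim!: dvdE)
    have ij': "(i',j') \<noteq> (0,0)" using ij0 i' j' by auto
    have "\<tau> * of_int d > \<tau>" using d2 tau_pos by simp
    hence "((\<tau> * of_int d) * of_int i', (\<tau> * of_int d) * of_int j') \<notin> D" by (rule notin[OF ij'])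
    moreover have "((\<tau> * of_int d) * of_int i', (\<tau> * of_int d) * of_int j') = (\<tau> * of_int i0, \<tau> * of_int j0)"
      by (simp add: i' j')
    ultimately show False using tauD by simp
  qed
  obtain a b :: int where bez: "a * i0 + b * j0 = 1" using bezout_int[of i0 j0] gcd1 by auto
  have abr: "real_of_int a * of_int i0 + of_int b * of_int j0 = 1"
    using bez by (metis of_int_1 of_int_add of_int_mult)
  define E where "E = {(x,y). (\<tau> * (x * of_int i0 - y * of_int b), \<tau> * (x * of_int j0 + y * of_int a)) \<in> D}"
  have Eiff: "(x,y) \<in> E \<longleftrightarrow> (\<tau> * (x * of_int i0 - y * of_int b), \<tau> * (x * of_int j0 + y * of_int a)) \<in> D" for x y
    by (simp add: E_def)
  have cvxE: "convex E"
  proof -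
    have "E = (\<lambda>z. (\<tau> * (fst z * of_int i0 - snd z * of_int b), \<tau> * (fst z * of_int j0 + snd z * of_int a))) -` D"
      by (auto simp: E_def)
    moreover have "linear (\<lambda>z::real\<times>real. (\<tau> * (fst z * of_int i0 - snd z * of_int b), \<tau> * (fst z * of_int j0 + snd z * of_int a)))"
      by (intro linearI) (auto simp: algebra_simps)
    ultimately show ?thesis using convex_linear_vimage cvx by auto
  qed
  have symE: "(-x,-y) \<in> E" if "(x,y) \<in> E" for x y
  proof -
    have "(- (\<tau> * (x * of_int i0 - y * of_int b)), - (\<tau> * (x * of_int j0 + y * of_int a))) \<in> D"
      using sym that by (simp add: Eiff)
    thus ?thesis by (simp add: Eiff algebra_simps)
  qed
  have bdE: "bounded E"
  proof -
    define g where "g = (\<lambda>z::real\<times>real. ((of_int a * fst z + of_int b * snd z)/\<tau>, (- of_int j0 * fst z + of_int i0 * snd z)/\<tau>))"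
    have "linear g" unfolding g_def using tau_pos by (intro linearI) (auto simp: field_simps)
    hence "bounded (g ` D)" using compact_imp_bounded[OF cpt]
      by (intro bounded_linear_image) (auto simp: linear_conv_bounded_linear)
    moreover have "E \<subseteq> g ` D"
    proof
      fix z assume "z \<in> E"
      then obtain x y where z: "z = (x,y)" and zD: "(\<tau> * (x * of_int i0 - y * of_int b), \<tau> * (x * of_int j0 + y * of_int a)) \<in> D"
        by (cases z) (auto simp: Eiff)
      have "g (\<tau> * (x * of_int i0 - y * of_int b), \<tau> * (x * of_int j0 + y * of_int a)) = (x,y)"
      proof -
        have "of_int a * (\<tau> * (x * of_int i0 - y * of_int b)) + of_int b * (\<tau> * (x * of_int j0 + y * of_int a))
              = \<tau> * x * (of_int a * of_int i0 + of_int b * of_int j0)" by (simp add: algebra_simps)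
        moreover have "- of_int j0 * (\<tau> * (x * of_int i0 - y * of_int b)) + of_int i0 * (\<tau> * (x * of_int j0 + y * of_int a))
              = \<tau> * y * (of_int a * of_int i0 + of_int b * of_int j0)" by (simp add: algebra_simps)
        ultimately show ?thesis using abr tau_pos by (simp add: g_def)
      qed
      thus "z \<in> g ` D" using zD z by (metis image_eqI)
    qed
    ultimately show ?thesis by (rule bounded_subset)
  qed
  have nlE: "NL E"
    unfolding NL_def
  proof (intro allI impI)
    fix k l :: int and s :: real assume kl: "(k,l) \<noteq> (0,0)" and s: "s > 1"
    have kl': "(k*i0 - l*b, k*j0 + l*a) \<noteq> (0,0)"
    proof
      assume z: "(k*i0 - l*b, k*j0 + l*a) = (0,0)"
      have "a*(k*i0 - l*b) + b*(k*j0 + l*a) = k*(a*i0 + b*j0)" by (simp add: algebra_simps)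
      hence "k = a*(k*i0 - l*b) + b*(k*j0 + l*a)" using bez by simp
      moreover have "-j0*(k*i0 - l*b) + i0*(k*j0 + l*a) = l*(a*i0 + b*j0)" by (simp add: algebra_simps)
      hence "l = -j0*(k*i0 - l*b) + i0*(k*j0 + l*a)" using bez by simp
      ultimately show False using z kl by simp
    qed
    have "\<tau> * s > \<tau>" using s tau_pos by simp
    hence "((\<tau> * s) * of_int (k*i0 - l*b), (\<tau> * s) * of_int (k*j0 + l*a)) \<notin> D" by (rule notin[OF kl'])
    thus "(s * of_int k, s * of_int l) \<notin> E" by (simp add: Eiff algebra_simps)
  qed
  have e1E: "(1,0) \<in> E" using tauD by (simp add: Eiff)
  obtain k l :: int where kl: "(k,l) \<noteq> (0,0)" and klE: "\<forall>x y. (x,y) \<in> E \<longrightarrow> of_int k * x + of_int l * y \<le> 4/3"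
    using CL[OF cvxE symE nlE bdE e1E] by blast
  define I where "I = k*a - l*j0"
  define J where "J = k*b + l*i0"
  have IJ: "(I,J) \<noteq> (0,0)"
  proof
    assume z: "(I,J) = (0,0)"
    have "I*i0 + J*j0 = k*(a*i0 + b*j0)" by (simp add: I_def J_def algebra_simps)
    hence "k = I*i0 + J*j0" using bez by simp
    moreover have "-I*b + J*a = l*(a*i0 + b*j0)" by (simp add: I_def J_def algebra_simps)
    hence "l = -I*b + J*a" using bez by simp
    ultimately show False using z kl by simp
  qed
  obtain p q where pq: "(p,q) \<in> D" "of_int I * p + of_int J * q > c" using H[OF IJ] by blast
  define x where "x = (of_int a * p + of_int b * q)/\<tau>"
  define y where "y = (- of_int j0 * p + of_int i0 * q)/\<tau>"
  have "\<tau> * (x * of_int i0 - y * of_int b) = p"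
  proof -
    have "\<tau> * (x * of_int i0 - y * of_int b) = (of_int a * p + of_int b * q) * of_int i0 - (- of_int j0 * p + of_int i0 * q) * of_int b"
      using tau_pos by (simp add: x_def y_def field_simps)
    also have "\<dots> = p * (of_int a * of_int i0 + of_int b * of_int j0)" by (simp add: algebra_simps)
    finally show ?thesis using abr by simp
  qed
  moreover have "\<tau> * (x * of_int j0 + y * of_int a) = q"
  proof -
    have "\<tau> * (x * of_int j0 + y * of_int a) = (of_int a * p + of_int b * q) * of_int j0 + (- of_int j0 * p + of_int i0 * q) * of_int a"
      using tau_pos by (simp add: x_def y_def field_simps)
    also have "\<dots> = q * (of_int a * of_int i0 + of_int b * of_int j0)" by (simp add: algebra_simps)
    finally show ?thesis using abr by simp
  qed
  ultimately have "(x,y) \<in> E" using pq(1) by (simp add: Eiff)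
  hence "of_int k * x + of_int l * y \<le> 4/3" using klE by blast
  moreover have "of_int k * x + of_int l * y = (of_int I * p + of_int J * q)/\<tau>"
    using tau_pos by (simp add: x_def y_def I_def J_def field_simps)
  ultimately have "(of_int I * p + of_int J * q)/\<tau> \<le> 4/3" by simp
  hence "of_int I * p + of_int J * q \<le> 4/3*\<tau>" using tau_pos by (simp add: field_simps)
  thus False using pq(2) tau_lt by simp
qed

lemma GEO:
  fixes K :: "(real \<times> real) set"
  assumes cvx: "convex K" and cpt: "compact K" and r: "r > 0" "ball 0 r \<subseteq> K"
  shows "\<exists>i j::int. (i,j) \<noteq> (0,0) \<and>
           (\<forall>x y. (x,y) \<in> K \<longrightarrow> of_int i * x + of_int j * y \<le> sqrt (2/3 * measure lebesgue K))"
proof (rule ccontr)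
  define A where "A = measure lebesgue K"
  define \<mu> where "\<mu> = sqrt (2/3 * A)"
  assume "\<not> ?thesis"
  hence Hk: "\<And>i j. (i,j) \<noteq> (0::int,0::int) \<Longrightarrow> \<exists>x y. (x,y) \<in> K \<and> of_int i * x + of_int j * y > \<mu>"
    by (auto simp: \<mu>_def A_def not_le)
  have Kf: "K \<in> fmeasurable lebesgue" using lmeasurable_compact[OF cpt] .
  have Apos: "A > 0"
  proof -
    have "measure lebesgue (ball (0::real\<times>real) r) = measure lborel (ball (0::real\<times>real) r)"
      by (intro measure_completion) auto
    moreover have "measure lborel (ball (0::real\<times>real) r) > 0" using content_ball_pos[OF r(1)] by blast
    moreover have "measure lebesgue (ball (0::real\<times>real) r) \<le> A"
      unfolding A_def using r by (intro measure_mono_fmeasurable Kf) auto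
    ultimately show ?thesis by linarith
  qed
  have mu: "\<mu> > 0" "\<mu> * \<mu> = 2/3 * A" using Apos by (auto simp: \<mu>_def)
  define D where "D = (\<Union>x\<in>K. \<Union>y\<in>K. {x - y})"
  have cvxD: "convex D" unfolding D_def by (rule convex_differences[OF cvx cvx])
  have cptD: "compact D" unfolding D_def by (rule compact_differences'[OF cpt cpt])
  have K0: "0 \<in> K" using r by auto
  have symD: "(-x,-y) \<in> D" if "(x,y) \<in> D" for x y
  proof -
    from that obtain a b where ab: "a \<in> K" "b \<in> K" "(x,y) = a - b" unfolding D_def by blast
    have "(-x,-y) = - (x,y)" by simp
    also have "\<dots> = b - a" using ab(3) by simp
    finally have "(-x,-y) = b - a" .
    thus ?thesis using ab unfolding D_def by blast
  qed
  have ballD: "ball 0 r \<subseteq> D"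
  proof
    fix z :: "real \<times> real" assume "z \<in> ball 0 r"
    hence "z \<in> K" using r by auto
    hence "z - 0 \<in> D" using K0 unfolding D_def by (intro UN_I[of z] UN_I[of 0]) auto
    thus "z \<in> D" by simp
  qed
  have HD: "\<exists>x y. (x,y) \<in> D \<and> of_int i * x + of_int j * y > 2*\<mu>" if ij: "(i,j) \<noteq> (0,0)" for i j :: int
  proof -
    obtain x1 y1 where 1: "(x1,y1) \<in> K" "of_int i * x1 + of_int j * y1 > \<mu>" using Hk[OF ij] by blast
    have "(-i,-j) \<noteq> (0,0)" using ij by auto
    then obtain x2 y2 where 2: "(x2,y2) \<in> K" "of_int (-i) * x2 + of_int (-j) * y2 > \<mu>" using Hk by blast
    have "(x1,y1) - (x2,y2) \<in> D" using 1 2 unfolding D_def by blast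
    moreover have "of_int i * (x1 - x2) + of_int j * (y1 - y2) > 2*\<mu>" using 1 2 by (simp add: algebra_simps)
    ultimately show ?thesis by auto
  qed
  obtain i j :: int where ij: "(i,j) \<noteq> (0,0)" and vD: "(3*(2*\<mu>)/4 * of_int i, 3*(2*\<mu>)/4 * of_int j) \<in> D"
    using SYM[OF cvxD symD cptD r(1) ballD _ HD] mu by auto
  then obtain p q where pK: "p \<in> K" and qK: "q \<in> K" and pq: "p - q = (3*\<mu>/2 * of_int i, 3*\<mu>/2 * of_int j)"
    unfolding D_def by auto
  define f where "f = (\<lambda>z::real\<times>real. - of_int j * fst z + of_int i * snd z)"
  have fcont: "continuous_on K f" unfolding f_def by (intro continuous_intros)
  obtain a where aK: "a \<in> K" and amax: "\<And>z. z \<in> K \<Longrightarrow> f z \<le> f a"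
    using continuous_attains_sup[OF cpt _ fcont] K0 by blast
  obtain b where bK: "b \<in> K" and bmin: "\<And>z. z \<in> K \<Longrightarrow> f b \<le> f z"
    using continuous_attains_inf[OF cpt _ fcont] K0 by blast
  have fa: "f a > \<mu>"
  proof -
    have "(-j, i) \<noteq> (0,0)" using ij by auto
    then obtain x y where "(x,y) \<in> K" "of_int (-j) * x + of_int i * y > \<mu>" using Hk by blast
    thus ?thesis using amax[of "(x,y)"] by (simp add: f_def)
  qed
  have fb: "f b < - \<mu>"
  proof -
    have "(j, -i) \<noteq> (0,0)" using ij by auto
    then obtain x y where "(x,y) \<in> K" "of_int j * x + of_int (-i) * y > \<mu>" using Hk by blast
    thus ?thesis using bmin[of "(x,y)"] by (simp add: f_def)
  qed
  have e: "fst p - fst q = 3*\<mu>/2 * of_int i" "snd p - snd q = 3*\<mu>/2 * of_int j" using pq by (auto simp: prod_eq_iff)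
  have fpq: "f p = f q"
  proof -
    have "f p - f q = - of_int j * (fst p - fst q) + of_int i * (snd p - snd q)" by (simp add: f_def algebra_simps)
    also have "\<dots> = - of_int j * (3*\<mu>/2 * of_int i) + of_int i * (3*\<mu>/2 * of_int j)" by (simp only: e)
    also have "\<dots> = 0" by simp
    finally have "f p - f q = 0" .
    thus ?thesis by simp
  qed
  have fqa: "f q \<le> f a" "f b \<le> f q" using amax[OF qK] bmin[OF qK] by auto
  define T1 where "T1 = convex hull {q, p, a}"
  define T2 where "T2 = convex hull {q, p, b}"
  have T1K: "T1 \<subseteq> K" unfolding T1_def using pK qK aK cvx by (intro hull_minimal) auto
  have T2K: "T2 \<subseteq> K" unfolding T2_def using pK qK bK cvx by (intro hull_minimal) auto
  have T1m: "T1 \<in> lmeasurable" "T2 \<in> lmeasurable" unfolding T1_def T2_def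
    by (auto intro!: lmeasurable_compact finite_imp_compact_convex_hull)
  have finner: "f z = (- of_int j, of_int i) \<bullet> z" for z by (simp add: f_def inner_prod_def)
  have cvxge: "convex {z. f q \<le> f z}" unfolding finner by (rule convex_halfspace_ge)
  have cvxle: "convex {z. f z \<le> f q}" unfolding finner by (rule convex_halfspace_le)
  have T1h: "T1 \<subseteq> {z. f q \<le> f z}" unfolding T1_def using fpq fqa by (intro hull_minimal cvxge) auto
  have T2h: "T2 \<subseteq> {z. f z \<le> f q}" unfolding T2_def using fpq fqa by (intro hull_minimal cvxle) auto
  have neg: "negligible (T1 \<inter> T2)"
  proof (rule negligible_subset)
    show "negligible {z::real\<times>real. (- of_int j, of_int i) \<bullet> z = f q}"
      using ij by (intro negligible_hyperplane) (auto simp: zero_prod_def)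
    show "T1 \<inter> T2 \<subseteq> {z::real\<times>real. (- of_int j, of_int i) \<bullet> z = f q}" using T1h T2h finner by fastforce
  qed
  have "measure lebesgue (T1 \<union> T2) = measure lebesgue T1 + measure lebesgue T2 + measure lebesgue {}"
    using measure_Un3_negligible[of T1 T2 "{}" "T1 \<union> T2"] T1m neg by auto
  hence mU: "measure lebesgue (T1 \<union> T2) = measure lebesgue T1 + measure lebesgue T2" by simp
  have "measure lebesgue (T1 \<union> T2) \<le> A"
    unfolding A_def using T1K T2K T1m by (intro measure_mono_fmeasurable Kf) auto
  moreover have "measure lebesgue T1 = 3*\<mu>/4 * (f a - f q)"
  proof -
    have "measure lebesgue T1 = \<bar>(fst a - fst q) * (snd p - snd q) - (fst p - fst q) * (snd a - snd q)\<bar> / 2"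
      unfolding T1_def by (rule tri_area)
    also have "(fst a - fst q) * (snd p - snd q) - (fst p - fst q) * (snd a - snd q)
        = (fst a - fst q) * (3*\<mu>/2 * of_int j) - (3*\<mu>/2 * of_int i) * (snd a - snd q)" by (simp only: e)
    also have "\<dots> = - (3*\<mu>/2) * (f a - f q)" by (simp add: f_def field_simps)
    also have "\<bar>- (3*\<mu>/2) * (f a - f q)\<bar> = 3*\<mu>/2 * (f a - f q)" using mu fqa by (simp add: abs_mult)
    finally show ?thesis by simp
  qed
  moreover have "measure lebesgue T2 = 3*\<mu>/4 * (f q - f b)"
  proof -
    have "measure lebesgue T2 = \<bar>(fst b - fst q) * (snd p - snd q) - (fst p - fst q) * (snd b - snd q)\<bar> / 2"
      unfolding T2_def by (rule tri_area)
    also have "(fst b - fst q) * (snd p - snd q) - (fst p - fst q) * (snd b - snd q)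
        = (fst b - fst q) * (3*\<mu>/2 * of_int j) - (3*\<mu>/2 * of_int i) * (snd b - snd q)" by (simp only: e)
    also have "\<dots> = (3*\<mu>/2) * (f q - f b)" by (simp add: f_def field_simps)
    also have "\<bar>(3*\<mu>/2) * (f q - f b)\<bar> = 3*\<mu>/2 * (f q - f b)" using mu fqa by (simp add: abs_mult)
    finally show ?thesis by simp
  qed
  ultimately have "3*\<mu>/4 * (f a - f q) + 3*\<mu>/4 * (f q - f b) \<le> A" using mU by linarith
  moreover have "3*\<mu>/4 * (f a - f q) + 3*\<mu>/4 * (f q - f b) = 3*\<mu>/4 * (f a - f b)" by (simp add: field_simps)
  ultimately have "3*\<mu>/4 * (f a - f b) \<le> A" by simp
  moreover have "3*\<mu>/4 * (f a - f b) > 3*\<mu>/4 * (2*\<mu>)" using fa fb mu by simp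
  moreover have "3*\<mu>/4 * (2*\<mu>) = A" using mu by (simp add: algebra_simps)
  ultimately show False by simp
qed



lemma tangent_perp:
  fixes U :: "(real \<times> real) set" and k :: "real \<times> real"
  assumes cl: "closed U" and pmax: "\<And>z. z \<in> U \<Longrightarrow> k \<bullet> z \<le> k \<bullet> p"
    and x: "snd x = p" and w: "w \<in> tangent_vectors (bdry_lift U) x"
  shows "k \<bullet> snd w = 0"
proof -
  obtain \<gamma> e where e: "e > 0" and \<gamma>S: "\<forall>t\<in>{-e<..<e}. \<gamma> t \<in> bdry_lift U" and \<gamma>0: "\<gamma> 0 = x"
    and der: "(\<gamma> has_vector_derivative w) (at 0)"
    using w unfolding tangent_vectors_def by blast
  define g where "g = (\<lambda>t. k \<bullet> snd (\<gamma> t))"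
  have "((\<lambda>t. k \<bullet> snd (\<gamma> t)) has_derivative (\<lambda>h. k \<bullet> snd (h *\<^sub>R w))) (at 0)"
  proof -
    have bl: "bounded_linear (\<lambda>z::(real\<times>real)\<times>(real\<times>real). k \<bullet> snd z)"
      by (intro bounded_linear_inner_right_comp bounded_linear_snd)
    have "(\<gamma> has_derivative (\<lambda>h. h *\<^sub>R w)) (at 0)" using der by (simp add: has_vector_derivative_def)
    from bounded_linear.has_derivative[OF bl this] show ?thesis by simp
  qed
  moreover have "(\<lambda>h. k \<bullet> snd (h *\<^sub>R w)) = (*) (k \<bullet> snd w)" by (auto simp: mult.commute)
  ultimately have gd: "(g has_real_derivative (k \<bullet> snd w)) (at 0)"
    unfolding g_def has_field_derivative_def by simp
  have "\<forall>y. \<bar>0 - y\<bar> < e \<longrightarrow> g y \<le> g 0"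
  proof (intro allI impI)
    fix y :: real assume "\<bar>0 - y\<bar> < e"
    hence "y \<in> {-e<..<e}" by auto
    hence "\<gamma> y \<in> bdry_lift U" using \<gamma>S by blast
    hence "snd (\<gamma> y) \<in> frontier U" by (auto simp: bdry_lift_def mem_Times_iff)
    hence "snd (\<gamma> y) \<in> U" using cl frontier_subset_closed by blast
    thus "g y \<le> g 0" using pmax \<gamma>0 x by (simp add: g_def)
  qed
  from DERIV_local_max[OF gd e this] show ?thesis .
qed

lemma action_closed_orbit:
  assumes "closed_reeb_orbit \<Sigma> \<gamma> T"
  shows "action \<gamma> T = T"
proof -
  have T: "T > 0" using assms by (simp add: closed_reeb_orbit_def)
  have "lam_can (\<gamma> t) (vector_derivative \<gamma> (at t)) = 1" for t
  proof -
    obtain v where v: "(\<gamma> has_vector_derivative v) (at t)" "is_reeb_vector \<Sigma> (\<gamma> t) v"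
      using assms unfolding closed_reeb_orbit_def by blast
    have "vector_derivative \<gamma> (at t) = v" using vector_derivative_at[OF v(1)] .
    thus ?thesis using v(2) by (simp add: is_reeb_vector_def)
  qed
  hence "action \<gamma> T = integral {0..T} (\<lambda>t. 1::real)" by (simp add: action_def)
  also have "\<dots> = T" using T by simp
  finally show ?thesis .
qed

lemma sys_nonneg:
  assumes "closed_reeb_orbit (bdry_lift A) \<gamma>0 T0"
  shows "0 \<le> sys_bd A" "sys_bd A \<le> T0"
proof -
  define S where "S = {action \<gamma> T | \<gamma> T. closed_reeb_orbit (bdry_lift A) \<gamma> T}"
  have pos: "x > 0" if "x \<in> S" for x
    using that action_closed_orbit by (auto simp: S_def closed_reeb_orbit_def)
  have T0S: "T0 \<in> S" using assms action_closed_orbit[OF assms] unfolding S_def by force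
  have "Inf S \<le> T0" by (rule cInf_lower[OF T0S]) (auto intro!: bdd_belowI[of _ 0] dest: pos less_imp_le)
  moreover have "0 \<le> Inf S" using T0S by (intro cInf_greatest) (auto dest: pos less_imp_le)
  ultimately show "0 \<le> sys_bd A" "sys_bd A \<le> T0" by (auto simp: sys_bd_def S_def)
qed

lemma reeb_bound:
  fixes U :: "(real \<times> real) set" and k p :: "real \<times> real"
  assumes cl: "closed U" and k0: "k \<noteq> 0" and kl: "in_lattice k" and pU: "p \<in> U"
    and pmax: "\<And>z. z \<in> U \<Longrightarrow> k \<bullet> z \<le> k \<bullet> p" and kp: "k \<bullet> p > 0"
  shows "0 \<le> sys_bd U" "sys_bd U \<le> k \<bullet> p"
proof -
  define T where "T = k \<bullet> p"
  define a where "a = (1/T) *\<^sub>R k"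
  define \<Sigma> where "\<Sigma> = bdry_lift U"
  have Tp: "T > 0" using kp by (simp add: T_def)
  have pfr: "p \<in> frontier U"
  proof -
    have "p \<notin> interior U"
    proof
      assume "p \<in> interior U"
      then obtain \<epsilon> where \<epsilon>: "\<epsilon> > 0" "ball p \<epsilon> \<subseteq> U" using open_contains_ball interior_subset
        by (meson mem_interior)
      define z where "z = p + (\<epsilon> / (2 * norm k)) *\<^sub>R k"
      have nk: "norm k > 0" using k0 by simp
      have "dist p z = \<epsilon>/2" using nk \<epsilon> by (simp add: z_def dist_norm)
      hence "z \<in> U" using \<epsilon> by auto
      hence "k \<bullet> z \<le> k \<bullet> p" by (rule pmax)
      moreover have "k \<bullet> z = k \<bullet> p + (\<epsilon> / (2 * norm k)) * (k \<bullet> k)" by (simp add: z_def inner_add_right)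
      moreover have "(\<epsilon> / (2 * norm k)) * (k \<bullet> k) > 0" using nk \<epsilon> k0 by (simp add: inner_gt_zero_iff)
      ultimately show False by simp
    qed
    thus ?thesis using pU cl by (simp add: frontier_def closure_closed)
  qed
  define \<gamma> where "\<gamma> = (\<lambda>t::real. (t *\<^sub>R a, p))"
  have der: "((\<lambda>t. ((c + t) *\<^sub>R a, p)) has_vector_derivative (a, 0)) (at s)" for c s :: real
    by (auto intro!: derivative_eq_intros)
  have reeb: "is_reeb_vector \<Sigma> (\<gamma> t) (a, 0)" for t
    unfolding is_reeb_vector_def
  proof (intro conjI ballI)
    show "(a, 0) \<in> tangent_vectors \<Sigma> (\<gamma> t)"
      unfolding tangent_vectors_def
      using der[of t 0] pfr
      by (intro CollectI exI[of _ "\<lambda>s. ((t + s) *\<^sub>R a, p)"] exI[of _ 1]) (auto simp: \<Sigma>_def bdry_lift_def \<gamma>_def)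
    show "lam_can (\<gamma> t) (a, 0) = 1" using Tp by (simp add: lam_can_def \<gamma>_def a_def T_def inner_commute)
    fix w assume w: "w \<in> tangent_vectors \<Sigma> (\<gamma> t)"
    have sp: "snd (\<gamma> t) = p" unfolding \<gamma>_def by simp
    have "k \<bullet> snd w = 0" by (rule tangent_perp[OF cl pmax sp w[unfolded \<Sigma>_def]])
    thus "dlam_can (a, 0) w = 0" by (simp add: dlam_can_def a_def inner_commute)
  qed
  have orb: "closed_reeb_orbit \<Sigma> \<gamma> T"
    unfolding closed_reeb_orbit_def
  proof (intro conjI allI)
    show "T > 0" by (rule Tp)
    fix t
    show "\<gamma> t \<in> \<Sigma>" using pfr by (simp add: \<Sigma>_def bdry_lift_def \<gamma>_def)
    show "\<exists>v. (\<gamma> has_vector_derivative v) (at t) \<and> is_reeb_vector \<Sigma> (\<gamma> t) v"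
      using der[of 0 t] reeb[of t] by (intro exI[of _ "(a,0)"]) (simp add: \<gamma>_def)
  next
    have "fst (\<gamma> T) - fst (\<gamma> 0) = k" using Tp by (simp add: \<gamma>_def a_def)
    thus "in_lattice (fst (\<gamma> T) - fst (\<gamma> 0))" using kl by simp
    show "snd (\<gamma> T) = snd (\<gamma> 0)" by (simp add: \<gamma>_def)
  qed
  from sys_nonneg[OF orb[unfolded \<Sigma>_def]] show "0 \<le> sys_bd U" "sys_bd U \<le> k \<bullet> p"
    by (auto simp: T_def)
qed

lemma U_props:
  fixes U :: "(real \<times> real) set"
  assumes "smooth_star_shaped_domain U"
  shows "compact U" "\<exists>r>0. ball 0 r \<subseteq> U"
proof -
  obtain f where sm: "smooth_fun f" and pos: "\<And>t. f t > 0" and per: "\<And>t. f (t + 2 * pi) = f t"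
    and U: "U = radial_domain f"
    using assms unfolding smooth_star_shaped_domain_def by blast
  have "(deriv ^^ 0) f differentiable (at x)" for x using sm unfolding smooth_fun_def by blast
  hence "f differentiable (at x)" for x by simp
  hence "isCont f x" for x by (simp add: differentiable_imp_continuous_within)
  hence cont: "continuous_on S f" for S by (simp add: continuous_at_imp_continuous_on)
  have pnat: "f (t + 2 * pi * of_nat m) = f t" for t m
  proof (induction m)
    case 0 thus ?case by simp
  next
    case (Suc m)
    have "f (t + 2 * pi * of_nat (Suc m)) = f ((t + 2 * pi * of_nat m) + 2 * pi)" by (simp add: algebra_simps)
    also have "\<dots> = f t" using per Suc by simp
    finally show ?case .
  qed
  have pint: "f (t + 2 * pi * of_int n) = f t" for t n
  proof (cases "n \<ge> 0")
    case True
    then obtain m where "n = int m" using nonneg_int_cases by blast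
    thus ?thesis using pnat by simp
  next
    case False
    define m where "m = nat (- n)"
    have m: "n = - int m" using False by (simp add: m_def)
    have "f ((t - 2 * pi * of_nat m) + 2 * pi * of_nat m) = f (t - 2 * pi * of_nat m)" by (rule pnat)
    thus ?thesis using m by simp
  qed
  have red: "\<exists>t'. 0 \<le> t' \<and> t' < 2 * pi \<and> f t' = f t \<and> cos t' = cos t \<and> sin t' = sin t" for t
  proof -
    define q where "q = t / (2*pi)"
    have tq: "t = q * (2*pi)" using pi_gt_zero by (simp add: q_def)
    define n where "n = - floor q"
    define t' where "t' = t + 2 * pi * of_int n"
    have t'q: "t' = (q - of_int (floor q)) * (2*pi)" by (simp add: t'_def n_def tq algebra_simps)
    have fl: "0 \<le> q - of_int (floor q)" "q - of_int (floor q) < 1"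
      by (simp_all add: of_int_floor_le) linarith
    have "0 \<le> t'" unfolding t'q using fl(1) pi_gt_zero by simp
    moreover have "t' < 2 * pi" unfolding t'q using fl(2) pi_gt_zero by simp
    moreover have "f t' = f t" by (simp add: t'_def pint)
    moreover have "cos t' = cos t" unfolding t'_def cos_add by simp
    moreover have "sin t' = sin t" unfolding t'_def sin_add by simp
    ultimately show ?thesis by blast
  qed
  define C where "C = {z::real\<times>real. 0 \<le> snd z \<and> snd z \<le> 2*pi \<and> 0 \<le> fst z \<and> fst z \<le> f (snd z)}"
  define g where "g = (\<lambda>z::real\<times>real. (fst z * cos (snd z), fst z * sin (snd z)))"
  have UgC: "U = g ` C"
  proof
    show "U \<subseteq> g ` C"
    proof
      fix z assume "z \<in> U"
      then obtain r t where z: "z = (r * cos t, r * sin t)" "0 \<le> r" "r \<le> f t"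
        unfolding U radial_domain_def by blast
      obtain t' where t': "0 \<le> t'" "t' < 2 * pi" "f t' = f t" "cos t' = cos t" "sin t' = sin t"
        using red by blast
      have "(r,t') \<in> C" using z t' by (simp add: C_def)
      moreover have "z = g (r,t')" using z t' by (simp add: g_def)
      ultimately show "z \<in> g ` C" by (rule rev_image_eqI)
    qed
    show "g ` C \<subseteq> U"
    proof
      fix z assume "z \<in> g ` C"
      then obtain w where w: "w \<in> C" "z = g w" by blast
      have "z = (fst w * cos (snd w), fst w * sin (snd w)) \<and> 0 \<le> fst w \<and> fst w \<le> f (snd w)"
        using w by (simp add: C_def g_def)
      thus "z \<in> U" unfolding U radial_domain_def by blast
    qed
  qed
  obtain tM where "tM \<in> {0..2*pi}" "\<forall>t\<in>{0..2*pi}. f t \<le> f tM"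
    using continuous_attains_sup[OF compact_Icc _ cont, of 0 "2*pi"] by auto
  hence M: "\<And>t. t \<in> {0..2*pi} \<Longrightarrow> f t \<le> f tM" by blast
  have "bounded C"
  proof (rule bounded_subset[OF bounded_cbox])
    show "C \<subseteq> cbox (0,0) (f tM, 2*pi)"
    proof
      fix z assume z: "z \<in> C"
      obtain x y where xy: "z = (x,y)" by (cases z)
      have "0 \<le> x" "x \<le> f tM" "0 \<le> y" "y \<le> 2*pi" using z M[of y] by (auto simp: C_def xy)
      thus "z \<in> cbox (0,0) (f tM, 2*pi)" by (simp add: xy)
    qed
  qed
  moreover have "closed C"
  proof -
    have cfst: "continuous_on UNIV (\<lambda>z::real\<times>real. fst z)" by (intro continuous_intros)
    have csnd: "continuous_on UNIV (\<lambda>z::real\<times>real. snd z)" by (intro continuous_intros)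
    have ccst: "continuous_on UNIV (\<lambda>z::real\<times>real. c)" for c :: real by (rule continuous_on_const)
    have "continuous_on UNIV (f \<circ> (\<lambda>z::real\<times>real. snd z))"
      by (rule continuous_on_compose[OF csnd cont])
    hence cfs: "continuous_on UNIV (\<lambda>z::real\<times>real. f (snd z))" by (simp add: o_def)
    have c1: "closed {z::real\<times>real. 0 \<le> snd z}" by (rule closed_Collect_le[OF ccst csnd])
    have c2: "closed {z::real\<times>real. snd z \<le> 2*pi}" by (rule closed_Collect_le[OF csnd ccst])
    have c3: "closed {z::real\<times>real. 0 \<le> fst z}" by (rule closed_Collect_le[OF ccst cfst])
    have c4: "closed {z::real\<times>real. fst z \<le> f (snd z)}" by (rule closed_Collect_le[OF cfst cfs])
    have "C = {z. 0 \<le> snd z} \<inter> {z. snd z \<le> 2*pi} \<inter> {z. 0 \<le> fst z} \<inter> {z. fst z \<le> f (snd z)}"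
      unfolding C_def by blast
    moreover have "closed ({z::real\<times>real. 0 \<le> snd z} \<inter> {z. snd z \<le> 2*pi} \<inter> {z. 0 \<le> fst z} \<inter> {z. fst z \<le> f (snd z)})"
      using c1 c2 c3 c4 by (intro closed_Int)
    ultimately show ?thesis by simp
  qed
  ultimately have "compact C" by (simp add: compact_eq_bounded_closed)
  moreover have "continuous_on C g" unfolding g_def by (intro continuous_intros)
  ultimately show "compact U" unfolding UgC by (rule compact_continuous_image[rotated])
  obtain tm where tm: "tm \<in> {0..2*pi}" "\<And>t. t \<in> {0..2*pi} \<Longrightarrow> f tm \<le> f t"
    using continuous_attains_inf[OF compact_Icc _ cont, of 0 "2*pi"] by auto
  define m where "m = f tm"
  have m0: "m > 0" using pos by (simp add: m_def)
  have "ball 0 m \<subseteq> U"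
  proof
    fix z :: "real \<times> real" assume zb: "z \<in> ball 0 m"
    obtain x y where z: "z = (x,y)" by (cases z)
    define \<rho> where "\<rho> = sqrt (x^2 + y^2)"
    have \<rho>m: "\<rho> < m" using zb by (simp add: z \<rho>_def norm_Pair)
    have \<rho>0: "\<rho> \<ge> 0" by (simp add: \<rho>_def)
    show "z \<in> U"
    proof (cases "\<rho> = 0")
      case True
      hence "x = 0" "y = 0" by (auto simp: \<rho>_def)
      moreover have "(0::real, 0::real) = (0 * cos 0, 0 * sin 0)" by simp
      ultimately show ?thesis using pos[of 0] by (auto simp: z U radial_domain_def intro!: exI[of _ 0])
    next
      case False
      hence \<rho>p: "\<rho> > 0" using \<rho>0 by simp
      have "(x/\<rho>)^2 + (y/\<rho>)^2 = 1"
      proof -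
        have e: "\<rho>^2 = x^2 + y^2" by (simp add: \<rho>_def)
        have "(x/\<rho>)^2 + (y/\<rho>)^2 = (x^2 + y^2)/\<rho>^2" by (simp add: power_divide add_divide_distrib)
        also have "\<dots> = \<rho>^2/\<rho>^2" using e by simp
        also have "\<dots> = 1" using \<rho>p by simp
        finally show ?thesis .
      qed
      then obtain \<theta> where th: "0 \<le> \<theta>" "\<theta> < 2*pi" "x/\<rho> = cos \<theta>" "y/\<rho> = sin \<theta>" by (rule sincos_total_2pi)
      have "x = \<rho> * cos \<theta>" "y = \<rho> * sin \<theta>" using th \<rho>p by (auto simp: field_simps)
      moreover have "\<rho> \<le> f \<theta>" using tm(2)[of \<theta>] th \<rho>m by (simp add: m_def)
      ultimately show ?thesis using \<rho>0 by (auto simp: z U radial_domain_def)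
    qed
  qed
  thus "\<exists>r>0. ball 0 r \<subseteq> U" using m0 by blast
qed

theorem corollaryA2:
  fixes U :: "(real \<times> real) set"
  assumes "smooth_star_shaped_domain U"
  shows "rho_sys U \<le> measure lebesgue (convex hull U) / (3 * measure lebesgue U)"
proof -
  have cU: "compact U" using U_props[OF assms] by blast
  obtain r where r: "r > 0" "ball 0 r \<subseteq> U" using U_props[OF assms] by blast
  define K where "K = convex hull U"
  have cvxK: "convex K" by (simp add: K_def)
  have cK: "compact K" unfolding K_def by (rule compact_convex_hull[OF cU])
  have UK: "U \<subseteq> K" by (simp add: K_def hull_subset)
  have rK: "ball 0 r \<subseteq> K" using r UK by blast
  obtain i j :: int where ij: "(i,j) \<noteq> (0,0)"
    and bnd: "\<forall>x y. (x,y) \<in> K \<longrightarrow> of_int i * x + of_int j * y \<le> sqrt (2/3 * measure lebesgue K)"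
    using GEO[OF cvxK cK r(1) rK] by blast
  define k where "k = (real_of_int i, real_of_int j)"
  have k0: "k \<noteq> 0" using ij by (auto simp: k_def zero_prod_def)
  have kl: "in_lattice k" by (simp add: k_def in_lattice_def)
  have Une: "U \<noteq> {}" using r by auto
  have "continuous_on U (\<lambda>z. k \<bullet> z)" by (intro continuous_intros)
  then obtain p where pU: "p \<in> U" and pmax: "\<And>z. z \<in> U \<Longrightarrow> k \<bullet> z \<le> k \<bullet> p"
    using continuous_attains_sup[OF cU Une, of "\<lambda>z. k \<bullet> z"] by blast
  have kp: "k \<bullet> p > 0"
  proof -
    have nk: "norm k > 0" using k0 by simp
    define z where "z = (r / (2 * norm k)) *\<^sub>R k"
    have "norm z = r/2" using nk r by (simp add: z_def)
    hence "z \<in> U" using r by (auto simp: dist_norm)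
    hence "k \<bullet> z \<le> k \<bullet> p" by (rule pmax)
    moreover have "k \<bullet> z = (r / (2 * norm k)) * (k \<bullet> k)" by (simp add: z_def)
    moreover have "(r / (2 * norm k)) * (k \<bullet> k) > 0" using nk r k0 by (simp add: inner_gt_zero_iff)
    ultimately show ?thesis by simp
  qed
  have sb: "0 \<le> sys_bd U" "sys_bd U \<le> k \<bullet> p"
    using reeb_bound[OF compact_imp_closed[OF cU] k0 kl pU pmax kp] by auto
  have "k \<bullet> p \<le> sqrt (2/3 * measure lebesgue K)"
  proof -
    obtain x y where p: "p = (x,y)" by (cases p)
    have "(x,y) \<in> K" using pU UK p by auto
    hence "of_int i * x + of_int j * y \<le> sqrt (2/3 * measure lebesgue K)" using bnd by blast
    thus ?thesis by (simp add: p k_def inner_prod_def)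
  qed
  hence s1: "sys_bd U \<le> sqrt (2/3 * measure lebesgue K)" using sb by simp
  have mK: "measure lebesgue K \<ge> 0" by simp
  have "(sys_bd U)^2 \<le> (sqrt (2/3 * measure lebesgue K))^2"
    using s1 sb(1) by (intro power_mono) auto
  also have "\<dots> = 2/3 * measure lebesgue K" using mK by simp
  finally have s2: "(sys_bd U)^2 \<le> 2/3 * measure lebesgue K" .
  have mU: "measure lebesgue U \<ge> 0" by simp
  have "rho_sys U = (sys_bd U)^2 / (2 * measure lebesgue U)" by (simp add: rho_sys_def vol_bd_def)
  also have "\<dots> \<le> (2/3 * measure lebesgue K) / (2 * measure lebesgue U)"
    using s2 mU by (intro divide_right_mono) auto
  also have "\<dots> = measure lebesgue K / (3 * measure lebesgue U)"
    by (cases "measure lebesgue U = 0") (simp_all add: field_simps)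
  finally show ?thesis by (simp add: K_def)
qed


end
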